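(* In the model described in the context, if $\tau\ge 3f+1$, then Algorithm 1 with threshold $t=f+1$ satisfies both completeness and weak accuracy.
   Context: Model. An asynchronous system has client processes (writers, readers, auditors) and $n$ storage objects $o_1,\dots,o_n$. Each $o_k$ is a linearisable loggable read/write register with a log $L_k$ (initially empty). Its rw-write($b$) stores a block; rw-read() returns the current block (or $\perp$) and appends $\langle p_r,\mathit{label}(b)\rangle$ to $L_k$, where $p_r$ is the reader and $\mathit{label}(b)$ identifies the value from which $b$ was derived; rw-getLog() returns $L_k$. A multi-writer multi-reader register over values $\mathbb{V}$ is emulated by information dispersal. An a-write($v$) encodes $v$ into $b_{v_1},\dots,b_{v_n}$ with $b_{v_k}$ sent to $o_k$. Any $\tau$ distinct blocks of $v$ suffice to recover $v$, and fewer do not. Reads are fast (one round-trip), and concurrency is unlimited. Faults. Writers and auditors can only crash. Faulty readers may crash or contact a subset of objects. At most $f$ objects are faulty; a faulty object may crash, omit its block, omit log records from auditors, and report records of nonexistent reads. Providing set $P_{p_r,v}$: the set of objects that received a write of $b_{v_k}$ and responded $b_{v_k}$ to a read of $p_r$. The value $v$ is effectively read by $p_r$ iff $|P_{p_r,v}|\ge\tau$. Algorithm 1 (a-audit with threshold $t$): 1. Invoke rw-getLog on all $n$ objects in parallel, and wait for responses from at least $n-f$; let $L[k]$ be the log received from $o_k$. 2. For every record $\langle p_r,\mathit{label}(v)\rangle$ in some $L[k]$, let $\mathcal{E}_{p_r,v}=\{k:\langle p_r,\mathit{label}(v)\rangle\in L[k]\}$, and add it to $E_A$ iff $|\mathcal{E}_{p_r,v}|\ge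 t$. 3. Return $E_A$. Completeness: $|P_{p_r,v}|\ge\tau$ before the audit implies $\mathcal{E}_{p_r,v}\in E_A$. Weak accuracy: for every correct reader $p_r$ that never invoked an a-read before the audit, $\mathcal{E}_{p_r,v}\notin E_A$ for all $v$. *)

theory Defs
  imports Main
begin

(* Abstract snapshot of an execution of the emulation at the time of one a-audit.
   Objects are o_0 .. o_(n-1), indexed by {..<n}.
   Log records <p_r, label(v)> are represented as pairs (p_r, v) (label identifies v).

   F        : set of faulty objects
   R        : objects whose rw-getLog responses the auditor waited for (step 1)
   L k      : log returned by o_k to the auditor (k \<in> R)
   H k      : true content of L_k at the point where the auditor's rw-getLog
              on o_k is linearised (meaningful for correct objects)
   P p v    : providing set P_{p,v}: objects that received a write of b_{v_k} and
              responded b_{v_k} to a read of p, the response occurring before the audit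
   correct p: reader p is correct
   invoked p: reader p invoked an a-read before the end of the audit *)

definition model_ok ::
  "nat \<Rightarrow> nat \<Rightarrow> nat set \<Rightarrow> nat set \<Rightarrow> (nat \<Rightarrow> ('p \<times> 'v) set) \<Rightarrow>
   (nat \<Rightarrow> ('p \<times> 'v) set) \<Rightarrow> ('p \<Rightarrow> 'v \<Rightarrow> nat set) \<Rightarrow> ('p \<Rightarrow> bool) \<Rightarrow> ('p \<Rightarrow> bool) \<Rightarrow> bool"
where
  "model_ok n f F R L H P correct invoked \<longleftrightarrow>
     \<comment> \<open>at most f objects are faulty\<close>
     F \<subseteq> {..<n} \<and> card F \<le> f \<and>
     \<comment> \<open>the auditor waits for at least n - f rw-getLog responses\<close>
     R \<subseteq> {..<n} \<and> n - f \<le> card R \<and>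
     \<comment> \<open>correct objects return their (linearisable) log faithfully; faulty ones are arbitrary\<close>
     (\<forall>k \<in> R - F. L k = H k) \<and>
     (\<forall>p v. P p v \<subseteq> {..<n}) \<and>
     \<comment> \<open>a read completed at a correct object before the audit is recorded in its log\<close>
     (\<forall>p v k. k \<in> P p v - F \<longrightarrow> (p, v) \<in> H k) \<and>
     \<comment> \<open>correct objects record only reads that happened, and a correct reader issues
         rw-reads only inside a-reads\<close>
     (\<forall>p v k. k \<in> {..<n} - F \<longrightarrow> (p, v) \<in> H k \<longrightarrow> correct p \<longrightarrow> invoked p)"

definition evidence :: "nat set \<Rightarrow> (nat \<Rightarrow> ('p \<times> 'v) set) \<Rightarrow> 'p \<Rightarrow> 'v \<Rightarrow> nat set" where
  "evidence R L p v = {k \<in> R. (p, v) \<in> L k}"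

(* Algorithm 1 with threshold t: the returned set E_A, whose elements are the evidence
   sets E_{p,v}, tagged with the reader and value they refer to *)
definition a_audit :: "nat \<Rightarrow> nat set \<Rightarrow> (nat \<Rightarrow> ('p \<times> 'v) set) \<Rightarrow> ('p \<times> 'v \<times> nat set) set" where
  "a_audit t R L = {(p, v, E). (\<exists>k \<in> R. (p, v) \<in> L k) \<and> E = evidence R L p v \<and> t \<le> card E}"

end

theory Submission
  imports Defs
begin

theorem theorem3:
  fixes n f \<tau> :: nat and F R :: "nat set"
    and L H :: "nat \<Rightarrow> ('p \<times> 'v) set" and P :: "'p \<Rightarrow> 'v \<Rightarrow> nat set"
    and correct invoked :: "'p \<Rightarrow> bool"
  assumes "model_ok n f F R L H P correct invoked"
    and "\<tau> \<ge> 3 * f + 1"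
  shows "(\<forall>p v. \<tau> \<le> card (P p v) \<longrightarrow> (p, v, evidence R L p v) \<in> a_audit (f + 1) R L)
       \<and> (\<forall>p. correct p \<and> \<not> invoked p \<longrightarrow> (\<forall>v E. (p, v, E) \<notin> a_audit (f + 1) R L))"
proof -
  have F: "F \<subseteq> {..<n}" "card F \<le> f" "R \<subseteq> {..<n}" "n - f \<le> card R"
    "\<forall>k \<in> R - F. L k = H k" "\<forall>p v. P p v \<subseteq> {..<n}"
    "\<forall>p v k. k \<in> P p v - F \<longrightarrow> (p, v) \<in> H k"
    "\<forall>p v k. k \<in> {..<n} - F \<longrightarrow> (p, v) \<in> H k \<longrightarrow> correct p \<longrightarrow> invoked p"
    using assms(1) unfolding model_ok_def by auto
  have finF: "finite F" using F(1) finite_subset by blast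
  have finR: "finite R" using F(3) finite_subset by blast
  have comp: "(p, v, evidence R L p v) \<in> a_audit (f + 1) R L" if h: "\<tau> \<le> card (P p v)" for p v
  proof -
    let ?P = "P p v"
    have finP: "finite ?P" using F(6) finite_subset by blast
    define A where "A = ?P \<inter> R - F"
    have "A \<subseteq> evidence R L p v" using F(5,7) unfolding A_def evidence_def by auto
    moreover have finE: "finite (evidence R L p v)" using finR unfolding evidence_def by auto
    ultimately have c1: "card A \<le> card (evidence R L p v)" by (simp add: card_mono)
    have "card ?P \<le> card (?P - R) + card (?P \<inter> R)"
      by (metis card_Un_le Un_Diff_Int)
    moreover have "card (?P - R) \<le> card ({..<n} - R)"
      using F(6) by (intro card_mono) auto
    moreover have "card ({..<n} - R) = n - card R" using F(3) finR
      by (simp add: card_Diff_subset)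
    moreover have "card (?P \<inter> R) \<le> card A + card F"
    proof -
      have "?P \<inter> R \<subseteq> A \<union> F" unfolding A_def by auto
      hence "card (?P \<inter> R) \<le> card (A \<union> F)" using finP finF unfolding A_def
        by (intro card_mono) auto
      thus ?thesis using card_Un_le[of A F] by linarith
    qed
    moreover have "card R \<le> n" using F(3) by (metis card_lessThan card_mono finite_lessThan)
    ultimately have "card ?P \<le> f + card A + f" using F(2,4) by linarith
    hence "f + 1 \<le> card A" using h assms(2) by linarith
    hence ge: "f + 1 \<le> card (evidence R L p v)" using c1 by linarith
    hence "evidence R L p v \<noteq> {}" by auto
    hence "\<exists>k \<in> R. (p, v) \<in> L k" unfolding evidence_def by auto
    thus ?thesis using ge unfolding a_audit_def by auto
  qed
  have acc: "(p, v, E) \<notin> a_audit (f + 1) R L" if c: "correct p" "\<not> invoked p" for p v E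
  proof
    assume "(p, v, E) \<in> a_audit (f + 1) R L"
    hence E: "E = evidence R L p v" "f + 1 \<le> card E" unfolding a_audit_def by auto
    have "\<not> E \<subseteq> F"
    proof
      assume "E \<subseteq> F"
      hence "card E \<le> card F" using finF by (simp add: card_mono)
      thus False using E F(2) by linarith
    qed
    then obtain k where k: "k \<in> E" "k \<notin> F" by auto
    hence "k \<in> R" "(p, v) \<in> L k" using E(1) unfolding evidence_def by auto
    hence "(p, v) \<in> H k" using F(5) k by auto
    moreover have "k \<in> {..<n} - F" using \<open>k \<in> R\<close> F(3) k by auto
    ultimately show False using F(8) c by blast
  qed
  show ?thesis using comp acc by blast
qed

end
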